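(* Let $n\ge 4$ and let $s_1=(1,2)$, $s_3=(3,4)\in S_n$. A real representation $\pi$ of $S_n$ is spinorial if and only if its restrictions to the cyclic subgroups $\langle s_1\rangle$ and $\langle s_1s_3\rangle$ are both spinorial.
   Context: A real representation of a finite group $G$ on a Euclidean space $V$ is regarded as a homomorphism $\pi:G\to\mathrm{O}(V)$. $\mathrm{Pin}(V)$ is the Pin group of $V$ (from the Clifford algebra with $v^2=-|v|^2$) with standard double cover $\rho:\mathrm{Pin}(V)\to\mathrm{O}(V)$, kernel $\{\pm1\}$. $\pi$ is spinorial if there is a homomorphism $\hat\pi:G\to\mathrm{Pin}(V)$ with $\rho\circ\hat\pi=\pi$. *)

theory Defs
  imports "HOL-Analysis.Analysis" "HOL-Algebra.Sym_Groups" "HOL-Algebra.Generated_Groups"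
          "HOL-Combinatorics.Transposition"
begin

text \<open>Euclidean space V = (real,'d) vec with standard orthonormal basis e_i (i :: 'd),
  the index type carrying a linear order used to order basis blades.
  Clifford algebra Cl(V) with v*v = -|v|^2: elements are coefficient functions
  on the blades e_I (I a subset of the index type), with
  e_I e_J = (-1)^(inv(I,J) + card(I \<inter> J)) e_(I symmetric-difference J).\<close>

type_synonym 'd cliff = "'d set \<Rightarrow> real"

definition cl_sign :: "'d::{finite,linorder} set \<Rightarrow> 'd set \<Rightarrow> real" where
  "cl_sign I J = (-1) ^ (card {(i, j). i \<in> I \<and> j \<in> J \<and> j < i} + card (I \<inter> J))"

definition symdiff :: "'a set \<Rightarrow> 'a set \<Rightarrow> 'a set" where
  "symdiff I K = (I - K) \<union> (K - I)"

definition cl_mult :: "'d::{finite,linorder} cliff \<Rightarrow> 'd cliff \<Rightarrow> 'd cliff" where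
  "cl_mult x y = (\<lambda>K. \<Sum>I\<in>UNIV. cl_sign I (symdiff I K) * x I * y (symdiff I K))"

definition cl_one :: "'d cliff" where
  "cl_one = (\<lambda>I. if I = {} then 1 else 0)"

definition vec_cl :: "(real,'d::finite) vec \<Rightarrow> 'd cliff" where
  "vec_cl v = (\<lambda>I. if \<exists>i. I = {i} then v $ (THE i. I = {i}) else 0)"

definition grade_inv :: "'d::finite cliff \<Rightarrow> 'd cliff" where
  "grade_inv x = (\<lambda>I. (-1) ^ card I * x I)"

definition cl_inv :: "'d::{finite,linorder} cliff \<Rightarrow> 'd cliff" where
  "cl_inv x = (THE y. cl_mult x y = cl_one \<and> cl_mult y x = cl_one)"

definition Pin :: "'d::{finite,linorder} cliff set" where
  "Pin = {foldr cl_mult (map vec_cl us) cl_one | us. \<forall>u\<in>set us. norm u = 1}"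

definition pin_rho :: "('d::{finite,linorder}) cliff \<Rightarrow> (real,'d) vec \<Rightarrow> (real,'d) vec" where
  "pin_rho x v = (\<chi> i. cl_mult (cl_mult (grade_inv x) (vec_cl v)) (cl_inv x) {i})"

definition real_rep :: "('g, 'b) monoid_scheme \<Rightarrow> ('g \<Rightarrow> (real,'d::finite) vec \<Rightarrow> (real,'d) vec) \<Rightarrow> bool" where
  "real_rep G \<pi> \<longleftrightarrow> (\<forall>g\<in>carrier G. orthogonal_transformation (\<pi> g)) \<and>
     (\<forall>g\<in>carrier G. \<forall>h\<in>carrier G. \<pi> (g \<otimes>\<^bsub>G\<^esub> h) = \<pi> g \<circ> \<pi> h)"

definition spinorial :: "('g, 'b) monoid_scheme \<Rightarrow> ('g \<Rightarrow> (real, 'd::{finite,linorder}) vec \<Rightarrow> (real,'d) vec) \<Rightarrow> bool" where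
  "spinorial G \<pi> \<longleftrightarrow> (\<exists>\<pi>h :: 'g \<Rightarrow> 'd cliff.
     (\<forall>g\<in>carrier G. \<pi>h g \<in> Pin) \<and>
     (\<forall>g\<in>carrier G. \<forall>h\<in>carrier G. \<pi>h (g \<otimes>\<^bsub>G\<^esub> h) = cl_mult (\<pi>h g) (\<pi>h h)) \<and>
     (\<forall>g\<in>carrier G. pin_rho (\<pi>h g) = \<pi> g))"

end

theory Submission
  imports Defs
begin


notation cl_mult (infixl "\<star>" 70)

lemma neg1_sq[simp]: "((-1::real)^k)\<^sup>2 = 1" "(-1::real)^k * (-1)^k = 1"
  by (induct k) (auto simp: power2_eq_square)

lemma symdiff_card_sign:
  assumes "finite X" "finite Y"
  shows "(-1::real) ^ card (symdiff X Y) = (-1) ^ card X * (-1) ^ card Y"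
proof -
  have d: "symdiff X Y = (X - Y) \<union> (Y - X)" by (simp add: symdiff_def)
  have c1: "card (symdiff X Y) = card (X - Y) + card (Y - X)"
    unfolding d using assms by (intro card_Un_disjoint) auto
  have cx: "card X = card (X - Y) + card (X \<inter> Y)"
    using card_Int_Diff[OF assms(1), of Y] by simp
  have cy: "card Y = card (Y - X) + card (X \<inter> Y)"
    using card_Int_Diff[OF assms(2), of X] by (simp add: Int_commute)
  have "(-1::real) ^ card X * (-1) ^ card Y
      = (-1) ^ card (X - Y) * (-1) ^ card (Y - X) * ((-1) ^ card (X \<inter> Y))\<^sup>2"
    unfolding cx cy by (simp add: power_add power2_eq_square)
  also have "\<dots> = (-1) ^ card (symdiff X Y)"
    by (simp add: c1 power_add)
  finally show ?thesis by simp
qed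

lemma symdiff_commute: "symdiff A B = symdiff B A"
  by (auto simp: symdiff_def)
lemma symdiff_assoc: "symdiff (symdiff A B) C = symdiff A (symdiff B C)"
  by (auto simp: symdiff_def)
lemma symdiff_self[simp]: "symdiff A A = {}"
  by (auto simp: symdiff_def)
lemma symdiff_empty[simp]: "symdiff A {} = A" "symdiff {} A = A"
  by (auto simp: symdiff_def)
lemma symdiff_cancel[simp]: "symdiff A (symdiff A B) = B" "symdiff (symdiff B A) A = B"
  by (auto simp: symdiff_def)

definition invp :: "'d::linorder set \<Rightarrow> 'd set \<Rightarrow> ('d \<times> 'd) set" where
  "invp I J = {(i, j). i \<in> I \<and> j \<in> J \<and> j < i}"

lemma cl_sign_alt: "cl_sign I J = (-1) ^ card (invp I J) * (-1) ^ card (I \<inter> J)"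
  unfolding cl_sign_def invp_def by (simp add: power_add)

lemma cl_sign_symdiff1:
  fixes A B J :: "'d::{finite,linorder} set"
  shows "cl_sign (symdiff A B) J = cl_sign A J * cl_sign B J"
proof -
  have 1: "invp (symdiff A B) J = symdiff (invp A J) (invp B J)"
    by (auto simp: invp_def symdiff_def)
  have 2: "symdiff A B \<inter> J = symdiff (A \<inter> J) (B \<inter> J)"
    by (auto simp: symdiff_def)
  show ?thesis unfolding cl_sign_alt 1 2
    by (simp add: symdiff_card_sign)
qed

lemma cl_sign_symdiff2:
  fixes A B J :: "'d::{finite,linorder} set"
  shows "cl_sign J (symdiff A B) = cl_sign J A * cl_sign J B"
proof -
  have 1: "invp J (symdiff A B) = symdiff (invp J A) (invp J B)"
    by (auto simp: invp_def symdiff_def)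
  have 2: "J \<inter> symdiff A B = symdiff (J \<inter> A) (J \<inter> B)"
    by (auto simp: symdiff_def)
  show ?thesis unfolding cl_sign_alt 1 2
    by (simp add: symdiff_card_sign)
qed

lemma cl_sign_empty[simp]: "cl_sign {} J = 1" "cl_sign J {} = 1"
  by (auto simp: cl_sign_def)

lemma cl_sign_sq[simp]: "cl_sign I J * cl_sign I J = 1"
  by (simp add: cl_sign_def flip: power_add)  

lemma cl_sign_single_self[simp]: "cl_sign {i} {i} = -1"
proof -
  have e: "{(a, b). a \<in> {i} \<and> b \<in> {i} \<and> b < a} = {}" by auto
  show ?thesis unfolding cl_sign_def e by simp
qed

lemma cl_sign_single_swap:
  fixes i j :: "'d::{finite,linorder}"
  assumes "i \<noteq> j"
  shows "cl_sign {i} {j} * cl_sign {j} {i} = -1"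
proof (cases "i < j")
  case True
  then have e: "{(a, b). a \<in> {i} \<and> b \<in> {j} \<and> b < a} = {}"
     "{(a, b). a \<in> {j} \<and> b \<in> {i} \<and> b < a} = {(j,i)}" by auto
  show ?thesis unfolding cl_sign_def e using assms by simp
next
  case False
  then have "j < i" using assms by simp
  then have e: "{(a, b). a \<in> {i} \<and> b \<in> {j} \<and> b < a} = {(i,j)}"
     "{(a, b). a \<in> {j} \<and> b \<in> {i} \<and> b < a} = {}" by auto
  show ?thesis unfolding cl_sign_def e using assms by simp
qed


lemma sum_symdiff_reindex:
  fixes f :: "'d::finite set \<Rightarrow> real"
  shows "(\<Sum>I\<in>UNIV. f I) = (\<Sum>L\<in>UNIV. f (symdiff J L))"
  by (rule sum.reindex_bij_witness[of _ "symdiff J" "symdiff J"]) auto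

lemma cl_mult_apply:
  "(x \<star> y) K = (\<Sum>I\<in>UNIV. cl_sign I (symdiff I K) * x I * y (symdiff I K))"
  by (simp add: cl_mult_def)

lemma sign_assoc_id:
  fixes J L K :: "'d::{finite,linorder} set"
  shows "cl_sign (symdiff J L) (symdiff (symdiff J L) K) * cl_sign J L =
         cl_sign J (symdiff J K) * cl_sign L (symdiff L (symdiff J K))"
proof -
  have s: "cl_sign J L * cl_sign J L = 1" by simp
  show ?thesis
    by (simp add: cl_sign_symdiff1 cl_sign_symdiff2)
qed

lemma cl_assoc: "(x \<star> y) \<star> z = x \<star> (y \<star> z)"
proof (rule ext)
  fix K
  have "((x \<star> y) \<star> z) K = (\<Sum>I\<in>UNIV. \<Sum>J\<in>UNIV. cl_sign I (symdiff I K) *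
      (cl_sign J (symdiff J I) * x J * y (symdiff J I)) * z (symdiff I K))"
    by (simp add: cl_mult_apply sum_distrib_left sum_distrib_right)
  also have "\<dots> = (\<Sum>J\<in>UNIV. \<Sum>I\<in>UNIV. cl_sign I (symdiff I K) *
      (cl_sign J (symdiff J I) * x J * y (symdiff J I)) * z (symdiff I K))"
    by (rule sum.swap)
  also have "\<dots> = (\<Sum>J\<in>UNIV. \<Sum>L\<in>UNIV. cl_sign (symdiff J L) (symdiff (symdiff J L) K) *
      (cl_sign J L * x J * y L) * z (symdiff (symdiff J L) K))"
  proof (rule sum.cong[OF refl])
    fix J
    show "(\<Sum>I\<in>UNIV. cl_sign I (symdiff I K) *
      (cl_sign J (symdiff J I) * x J * y (symdiff J I)) * z (symdiff I K)) =
      (\<Sum>L\<in>UNIV. cl_sign (symdiff J L) (symdiff (symdiff J L) K) *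
      (cl_sign J L * x J * y L) * z (symdiff (symdiff J L) K))"
      by (subst sum_symdiff_reindex[where J=J]) simp
  qed
  also have "\<dots> = (\<Sum>J\<in>UNIV. \<Sum>L\<in>UNIV. cl_sign J (symdiff J K) * x J *
      (cl_sign L (symdiff L (symdiff J K)) * y L * z (symdiff L (symdiff J K))))"
  proof (intro sum.cong refl)
    fix J L
    have e: "symdiff (symdiff J L) K = symdiff L (symdiff J K)"
      by (auto simp: symdiff_def)
    show "cl_sign (symdiff J L) (symdiff (symdiff J L) K) *
      (cl_sign J L * x J * y L) * z (symdiff (symdiff J L) K) =
      cl_sign J (symdiff J K) * x J *
      (cl_sign L (symdiff L (symdiff J K)) * y L * z (symdiff L (symdiff J K)))"
      using sign_assoc_id[of J L K] unfolding e
      by (metis (no_types, lifting) mult.assoc mult.left_commute)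
  qed
  also have "\<dots> = (x \<star> (y \<star> z)) K"
    by (simp add: cl_mult_apply sum_distrib_left)
  finally show "((x \<star> y) \<star> z) K = (x \<star> (y \<star> z)) K" .
qed

lemma cl_one_left[simp]: fixes x :: "'d::{finite,linorder} cliff" shows "cl_one \<star> x = x"
proof (rule ext)
  fix K
  have "(cl_one \<star> x) K = (\<Sum>I\<in>UNIV. if I = ({}::'d set) then x K else 0)"
    unfolding cl_mult_apply cl_one_def
    by (intro sum.cong refl) auto
  then show "(cl_one \<star> x) K = x K" by simp
qed

lemma cl_one_right[simp]: "x \<star> cl_one = x"
proof (rule ext)
  fix K
  have "(x \<star> cl_one) K = (\<Sum>I\<in>UNIV. if I = K then x K else 0)"
    unfolding cl_mult_apply cl_one_def
    by (rule sum.cong) (auto simp: symdiff_def)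
  then show "(x \<star> cl_one) K = x K" by simp
qed

definition scl :: "real \<Rightarrow> 'd cliff \<Rightarrow> 'd cliff" where
  "scl a x = (\<lambda>I. a * x I)"

definition cadd :: "'d cliff \<Rightarrow> 'd cliff \<Rightarrow> 'd cliff" where
  "cadd x y = (\<lambda>I. x I + y I)"

lemma scl_mult_left: "scl a x \<star> y = scl a (x \<star> y)"
  by (rule ext) (simp add: cl_mult_apply scl_def sum_distrib_left mult_ac)

lemma scl_mult_right: "x \<star> scl a y = scl a (x \<star> y)"
  by (rule ext) (simp add: cl_mult_apply scl_def sum_distrib_left mult_ac)

lemma cadd_mult_left: "cadd x y \<star> z = cadd (x \<star> z) (y \<star> z)"
  by (rule ext) (simp add: cl_mult_apply cadd_def sum.distrib algebra_simps)

lemma cadd_mult_right: "z \<star> cadd x y = cadd (z \<star> x) (z \<star> y)"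
  by (rule ext) (simp add: cl_mult_apply cadd_def sum.distrib algebra_simps)

lemma scl_scl[simp]: "scl a (scl b x) = scl (a * b) x"
  by (simp add: scl_def fun_eq_iff)

lemma scl_one[simp]: "scl 1 x = x"
  by (simp add: scl_def)

lemma vec_cl_apply: "vec_cl v I = (\<Sum>i\<in>UNIV. if I = {i} then v $ i else 0)"
proof (cases "\<exists>i. I = {i}")
  case True
  then obtain i where i: "I = {i}" by blast
  have "(\<Sum>j\<in>UNIV. if I = {j} then v $ j else 0) = (\<Sum>j\<in>UNIV. if j = i then v $ i else 0)"
    by (rule sum.cong) (auto simp: i)
  then show ?thesis by (simp add: vec_cl_def i)
next
  case False
  then show ?thesis by (simp add: vec_cl_def)
qed

lemma vec_cl_single[simp]: "vec_cl v {i} = v $ i"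
  by (simp add: vec_cl_def)

lemma vec_mult_apply:
  "(vec_cl v \<star> y) K = (\<Sum>i\<in>UNIV. v $ i * cl_sign {i} (symdiff {i} K) * y (symdiff {i} K))"
proof -
  have "(vec_cl v \<star> y) K = (\<Sum>I\<in>UNIV. \<Sum>i\<in>UNIV. if I = {i} then cl_sign I (symdiff I K) * v $ i * y (symdiff I K) else 0)"
    unfolding cl_mult_apply vec_cl_apply
  proof (rule sum.cong[OF refl])
    fix I
    show "cl_sign I (symdiff I K) * (\<Sum>i\<in>UNIV. if I = {i} then v $ i else 0) * y (symdiff I K) =
      (\<Sum>i\<in>UNIV. if I = {i} then cl_sign I (symdiff I K) * v $ i * y (symdiff I K) else 0)"
      unfolding sum_distrib_left sum_distrib_right
      by (rule sum.cong) auto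
  qed
  also have "\<dots> = (\<Sum>i\<in>UNIV. \<Sum>I\<in>UNIV. if I = {i} then cl_sign I (symdiff I K) * v $ i * y (symdiff I K) else 0)"
    by (rule sum.swap)
  also have "\<dots> = (\<Sum>i\<in>UNIV. v $ i * cl_sign {i} (symdiff {i} K) * y (symdiff {i} K))"
    by (simp add: mult_ac)
  finally show ?thesis .
qed

lemma mult_vec_apply:
  "(y \<star> vec_cl v) K = (\<Sum>i\<in>UNIV. cl_sign (symdiff K {i}) {i} * y (symdiff K {i}) * v $ i)"
proof -
  have "(y \<star> vec_cl v) K = (\<Sum>I\<in>UNIV. \<Sum>i\<in>UNIV. if I = symdiff K {i} then cl_sign I {i} * y I * v $ i else 0)"
    unfolding cl_mult_apply vec_cl_apply
  proof (rule sum.cong[OF refl])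
    fix I
    show "cl_sign I (symdiff I K) * y I * (\<Sum>i\<in>UNIV. if symdiff I K = {i} then v $ i else 0) =
      (\<Sum>i\<in>UNIV. if I = symdiff K {i} then cl_sign I {i} * y I * v $ i else 0)"
      unfolding sum_distrib_left
    proof (rule sum.cong[OF refl])
      fix i
      have "(symdiff I K = {i}) = (I = symdiff K {i})" by (auto simp: symdiff_def)
      then show "cl_sign I (symdiff I K) * y I * (if symdiff I K = {i} then v $ i else 0) =
         (if I = symdiff K {i} then cl_sign I {i} * y I * v $ i else 0)"
        by auto
    qed
  qed
  also have "\<dots> = (\<Sum>i\<in>UNIV. \<Sum>I\<in>UNIV. if I = symdiff K {i} then cl_sign I {i} * y I * v $ i else 0)"
    by (rule sum.swap)
  also have "\<dots> = (\<Sum>i\<in>UNIV. cl_sign (symdiff K {i}) {i} * y (symdiff K {i}) * v $ i)"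
    by simp
  finally show ?thesis .
qed


lemma sign_swap_sum: "cl_sign {i} {j} + cl_sign {j} {i} = (if i = j then -2 else (0::real))"
proof (cases "i = j")
  case False
  have "cl_sign {j} {i} = cl_sign {i} {j} * cl_sign {i} {j} * cl_sign {j} {i}" by simp
  also have "\<dots> = cl_sign {i} {j} * (cl_sign {i} {j} * cl_sign {j} {i})" by (simp only: mult.assoc)
  also have "\<dots> = - cl_sign {i} {j}" using cl_sign_single_swap[OF False] by simp
  finally show ?thesis using False by simp
qed simp

lemma vv_apply:
  "(vec_cl u \<star> vec_cl v) K = (\<Sum>i\<in>UNIV. \<Sum>j\<in>UNIV. if K = symdiff {i} {j} then u$i * v$j * cl_sign {i} {j} else 0)"
  unfolding vec_mult_apply
proof (rule sum.cong[OF refl])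
  fix i
  show "u $ i * cl_sign {i} (symdiff {i} K) * vec_cl v (symdiff {i} K) =
    (\<Sum>j\<in>UNIV. if K = symdiff {i} {j} then u $ i * v $ j * cl_sign {i} {j} else 0)"
    unfolding vec_cl_apply sum_distrib_left
  proof (rule sum.cong[OF refl])
    fix j
    have "(symdiff {i} K = {j}) = (K = symdiff {i} {j})" by (auto simp: symdiff_def)
    then show "u $ i * cl_sign {i} (symdiff {i} K) * (if symdiff {i} K = {j} then v $ j else 0) =
      (if K = symdiff {i} {j} then u $ i * v $ j * cl_sign {i} {j} else 0)"
      by auto
  qed
qed

lemma vec_anticomm:
  "cadd (vec_cl u \<star> vec_cl v) (vec_cl v \<star> vec_cl u) = scl (-2 * (u \<bullet> v)) cl_one"
proof (rule ext)
  fix K :: "'a set"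
  have "cadd (vec_cl u \<star> vec_cl v) (vec_cl v \<star> vec_cl u) K =
     (\<Sum>i\<in>UNIV. \<Sum>j\<in>UNIV. if K = symdiff {i} {j} then u$i * v$j * cl_sign {i} {j} else 0) +
     (\<Sum>j\<in>UNIV. \<Sum>i\<in>UNIV. if K = symdiff {j} {i} then v$j * u$i * cl_sign {j} {i} else 0)"
    by (simp add: cadd_def vv_apply)
  also have "\<dots> = (\<Sum>i\<in>UNIV. \<Sum>j\<in>UNIV. if K = symdiff {i} {j} then u$i * v$j * cl_sign {i} {j} else 0) +
     (\<Sum>i\<in>UNIV. \<Sum>j\<in>UNIV. if K = symdiff {i} {j} then u$i * v$j * cl_sign {j} {i} else 0)"
  proof -
    have "(\<Sum>j\<in>UNIV. \<Sum>i\<in>UNIV. if K = symdiff {j} {i} then v$j * u$i * cl_sign {j} {i} else 0)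
      = (\<Sum>i\<in>UNIV. \<Sum>j\<in>UNIV. if K = symdiff {j} {i} then v$j * u$i * cl_sign {j} {i} else 0)"
      by (rule sum.swap)
    also have "\<dots> = (\<Sum>i\<in>UNIV. \<Sum>j\<in>UNIV. if K = symdiff {i} {j} then u$i * v$j * cl_sign {j} {i} else 0)"
      by (intro sum.cong refl) (simp add: symdiff_commute mult.commute)
    finally show ?thesis by simp
  qed
  also have "\<dots> = (\<Sum>i\<in>UNIV. \<Sum>j\<in>UNIV. if K = symdiff {i} {j} then u$i * v$j * (cl_sign {i} {j} + cl_sign {j} {i}) else 0)"
    by (simp only: sum.distrib[symmetric]) (intro sum.cong refl, auto simp: algebra_simps)
  also have "\<dots> = (\<Sum>i\<in>UNIV. \<Sum>j\<in>UNIV. if j = i then (if K = {} then -2 * (u$i * v$i) else 0) else 0)"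
    by (intro sum.cong refl) (auto simp: sign_swap_sum)
  also have "\<dots> = (\<Sum>i\<in>UNIV. if K = {} then -2 * (u$i * v$i) else 0)"
    by simp
  also have "\<dots> = scl (-2 * (u \<bullet> v)) cl_one K"
    by (simp add: scl_def cl_one_def inner_vec_def sum_distrib_left)
  finally show "cadd (vec_cl u \<star> vec_cl v) (vec_cl v \<star> vec_cl u) K = scl (-2 * (u \<bullet> v)) cl_one K" .
qed

lemma vec_sq: "vec_cl u \<star> vec_cl u = scl (- (u \<bullet> u)) cl_one"
proof (rule ext)
  fix K
  have "cadd (vec_cl u \<star> vec_cl u) (vec_cl u \<star> vec_cl u) K = scl (-2 * (u \<bullet> u)) cl_one K"
    by (simp add: vec_anticomm)
  then show "(vec_cl u \<star> vec_cl u) K = scl (- (u \<bullet> u)) cl_one K"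
    by (simp add: cadd_def scl_def)
qed

lemma vec_cl_add: "vec_cl (a + b) = cadd (vec_cl a) (vec_cl b)"
  by (rule ext) (simp add: vec_cl_def cadd_def)

lemma vec_cl_scale: "vec_cl (c *\<^sub>R a) = scl c (vec_cl a)"
  by (rule ext) (simp add: vec_cl_def scl_def)

lemma vec_cl_diff: "vec_cl (a - b) = cadd (vec_cl a) (scl (-1) (vec_cl b))"
  by (rule ext) (simp add: vec_cl_def scl_def cadd_def)

lemma vec_cl_inj: "vec_cl a = vec_cl b \<Longrightarrow> a = b"
  by (metis vec_cl_single vec_eq_iff)

definition refl :: "(real,'d::finite) vec \<Rightarrow> (real,'d) vec \<Rightarrow> (real,'d) vec" where
  "refl u w = w - (2 * (u \<bullet> w)) *\<^sub>R u"

lemma vec_reflect: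
  assumes "norm u = 1"
  shows "vec_cl u \<star> vec_cl w \<star> vec_cl u = vec_cl (refl u w)"
proof -
  have uu: "u \<bullet> u = 1" using assms by (simp add: norm_eq_1)
  have "vec_cl u \<star> vec_cl w = cadd (scl (-1) (vec_cl w \<star> vec_cl u)) (scl (-2 * (u \<bullet> w)) cl_one)"
  proof (rule ext)
    fix K
    have "cadd (vec_cl u \<star> vec_cl w) (vec_cl w \<star> vec_cl u) K = scl (-2 * (u \<bullet> w)) cl_one K"
      by (simp add: vec_anticomm)
    then show "(vec_cl u \<star> vec_cl w) K = cadd (scl (-1) (vec_cl w \<star> vec_cl u)) (scl (-2 * (u \<bullet> w)) cl_one) K"
      by (simp add: cadd_def scl_def)
  qed
  then have "vec_cl u \<star> vec_cl w \<star> vec_cl u =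
     cadd (scl (-1) (vec_cl w \<star> (vec_cl u \<star> vec_cl u))) (scl (-2 * (u \<bullet> w)) (vec_cl u))"
    by (simp add: cadd_mult_left scl_mult_left cl_assoc)
  also have "\<dots> = vec_cl (refl u w)"
    by (simp add: vec_sq uu scl_mult_right refl_def vec_cl_diff vec_cl_scale)
  finally show ?thesis .
qed


definition pinprod :: "(real,'d::{finite,linorder}) vec list \<Rightarrow> 'd cliff" where
  "pinprod us = foldr cl_mult (map vec_cl us) cl_one"

definition unitlist :: "(real,'d::finite) vec list \<Rightarrow> bool" where
  "unitlist us \<longleftrightarrow> (\<forall>u\<in>set us. norm u = 1)"

lemma pinprod_simps[simp]: "pinprod [] = cl_one" "pinprod (u # us) = vec_cl u \<star> pinprod us"
  by (simp_all add: pinprod_def)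

lemma unitlist_simps[simp]: "unitlist []" "unitlist (u # us) \<longleftrightarrow> norm u = 1 \<and> unitlist us"
  "unitlist (us @ ws) \<longleftrightarrow> unitlist us \<and> unitlist ws" "unitlist (rev us) \<longleftrightarrow> unitlist us"
  by (auto simp: unitlist_def)

lemma pinprod_append: "pinprod (us @ ws) = pinprod us \<star> pinprod ws"
  by (induct us) (simp_all add: cl_assoc)

lemma Pin_iff: "x \<in> Pin \<longleftrightarrow> (\<exists>us. unitlist us \<and> x = pinprod us)"
  by (auto simp: Pin_def pinprod_def unitlist_def)

lemma scl_cl_one_mult: "scl a cl_one \<star> x = scl a x"
  by (simp add: scl_mult_left)

lemma mult_scl_cl_one: "x \<star> scl a cl_one = scl a x"
  by (simp add: scl_mult_right)

lemma pinprod_rev: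
  assumes "unitlist us"
  shows "pinprod us \<star> pinprod (rev us) = scl ((-1) ^ length us) cl_one"
  using assms
proof (induct us)
  case Nil then show ?case by simp
next
  case (Cons u us)
  have uu: "u \<bullet> u = 1" using Cons.prems by (simp add: norm_eq_1)
  have "pinprod (u # us) \<star> pinprod (rev (u # us)) = vec_cl u \<star> (pinprod us \<star> pinprod (rev us)) \<star> vec_cl u"
    by (simp add: pinprod_append cl_assoc)
  also have "\<dots> = scl ((-1) ^ length us) (vec_cl u \<star> vec_cl u)"
    using Cons by (simp add: scl_mult_right mult_scl_cl_one scl_mult_left)
  also have "\<dots> = scl ((-1) ^ length (u # us)) cl_one"
    by (simp add: vec_sq uu)
  finally show ?case .
qed

lemma pinprod_rev':
  assumes "unitlist us"
  shows "pinprod (rev us) \<star> pinprod us = scl ((-1) ^ length us) cl_one"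
  using pinprod_rev[of "rev us"] assms by simp

lemma cl_inv_unique:
  assumes "x \<star> y = cl_one" "y \<star> x = cl_one"
  shows "cl_inv x = y"
  unfolding cl_inv_def
proof (rule the_equality)
  show "x \<star> y = cl_one \<and> y \<star> x = cl_one" using assms by simp
next
  fix y' assume a: "x \<star> y' = cl_one \<and> y' \<star> x = cl_one"
  have "y' = (y \<star> x) \<star> y'" using assms by simp
  also have "\<dots> = y \<star> (x \<star> y')" by (simp add: cl_assoc)
  also have "\<dots> = y" using a by simp
  finally show "y' = y" .
qed

lemma cl_inv_pinprod:
  assumes "unitlist us"
  shows "cl_inv (pinprod us) = scl ((-1) ^ length us) (pinprod (rev us))"
  by (rule cl_inv_unique)
     (simp_all add: scl_mult_right scl_mult_left pinprod_rev pinprod_rev' assms flip: power_add)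

lemma pinprod_parity:
  assumes "pinprod us I \<noteq> 0"
  shows "(-1::real) ^ card I = (-1) ^ length us"
  using assms
proof (induct us arbitrary: I)
  case Nil then show ?case by (simp add: cl_one_def split: if_splits)
next
  case (Cons u us)
  from Cons.prems have "(\<Sum>i\<in>UNIV. u $ i * cl_sign {i} (symdiff {i} I) * pinprod us (symdiff {i} I)) \<noteq> 0"
    by (simp add: vec_mult_apply)
  then obtain i where "pinprod us (symdiff {i} I) \<noteq> 0"
    by (metis (no_types, lifting) mult_zero_right sum.neutral)
  then have "(-1::real) ^ card (symdiff {i} I) = (-1) ^ length us" by (rule Cons.hyps)
  then show ?case by (simp add: symdiff_card_sign)
qed

lemma grade_inv_pinprod: "grade_inv (pinprod us) = scl ((-1) ^ length us) (pinprod us)"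
proof (rule ext)
  fix I
  show "grade_inv (pinprod us) I = scl ((-1) ^ length us) (pinprod us) I"
    using pinprod_parity[of us I] by (cases "pinprod us I = 0") (auto simp: grade_inv_def scl_def)
qed

definition rlist :: "(real,'d::finite) vec list \<Rightarrow> (real,'d) vec \<Rightarrow> (real,'d) vec" where
  "rlist us = foldr (\<lambda>u f. refl u \<circ> f) us id"

lemma rlist_simps[simp]: "rlist [] = id" "rlist (u # us) = refl u \<circ> rlist us"
  by (simp_all add: rlist_def)

lemma rlist_append: "rlist (us @ ws) = rlist us \<circ> rlist ws"
  by (induct us) auto

lemma conj_pinprod:
  assumes "unitlist us"
  shows "pinprod us \<star> vec_cl v \<star> pinprod (rev us) = vec_cl (rlist us v)"
  using assms
proof (induct us)
  case Nil then show ?case by simp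
next
  case (Cons u us)
  have "pinprod (u # us) \<star> vec_cl v \<star> pinprod (rev (u # us)) =
     vec_cl u \<star> (pinprod us \<star> vec_cl v \<star> pinprod (rev us)) \<star> vec_cl u"
    by (simp add: pinprod_append cl_assoc)
  also have "\<dots> = vec_cl (refl u (rlist us v))"
    using Cons by (simp add: vec_reflect)
  finally show ?case by simp
qed

lemma pin_rho_pinprod:
  assumes "unitlist us"
  shows "pin_rho (pinprod us) = rlist us"
proof (rule ext)
  fix v
  have "cl_mult (cl_mult (grade_inv (pinprod us)) (vec_cl v)) (cl_inv (pinprod us)) = vec_cl (rlist us v)"
    by (simp add: grade_inv_pinprod cl_inv_pinprod assms scl_mult_left scl_mult_right conj_pinprod
        flip: power_add)
  then show "pin_rho (pinprod us) v = rlist us v"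
    by (simp add: pin_rho_def vec_eq_iff)
qed

lemma refl_refl: "norm u = 1 \<Longrightarrow> refl u (refl u w) = w"
  by (simp add: refl_def inner_diff_right algebra_simps norm_eq_1)

definition e0 :: "(real,'d::finite) vec" where "e0 = axis undefined 1"

lemma norm_e0[simp]: "norm (e0 :: (real,'d::finite) vec) = 1"
  by (simp add: e0_def)

lemma e0_inner[simp]: "(e0 :: (real,'d::finite) vec) \<bullet> e0 = 1"
  using norm_e0 norm_eq_1 by blast

lemma neg_pinprod: "scl (-1) (pinprod us) = pinprod (e0 # e0 # us)"
proof -
  have "pinprod (e0 # e0 # us) = (vec_cl e0 \<star> vec_cl e0) \<star> pinprod us" by (simp add: cl_assoc)
  also have "\<dots> = scl (-1) (pinprod us)"
    by (simp add: vec_sq scl_mult_left norm_eq_1[symmetric])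
  finally show ?thesis by simp
qed

lemma rlist_neg: "rlist (e0 # e0 # us) = rlist us"
  by (auto simp: refl_refl)

lemma Pin_one: "cl_one \<in> Pin"
  by (auto simp: Pin_iff intro: exI[of _ "[]"])

lemma Pin_mult: "x \<in> Pin \<Longrightarrow> y \<in> Pin \<Longrightarrow> x \<star> y \<in> Pin"
proof -
  assume "x \<in> Pin" "y \<in> Pin"
  then obtain us ws where "unitlist us" "x = pinprod us" "unitlist ws" "y = pinprod ws"
    by (auto simp: Pin_iff)
  then show ?thesis unfolding Pin_iff by (intro exI[of _ "us @ ws"]) (simp add: pinprod_append)
qed

lemma Pin_neg: "x \<in> Pin \<Longrightarrow> scl (-1) x \<in> Pin"
proof -
  assume "x \<in> Pin"
  then obtain us where "unitlist us" "x = pinprod us" by (auto simp: Pin_iff)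
  then show ?thesis unfolding Pin_iff by (intro exI[of _ "e0 # e0 # us"]) (simp add: neg_pinprod)
qed

lemma Pin_sign: "x \<in> Pin \<Longrightarrow> scl ((-1) ^ k) x \<in> Pin"
proof (induct k)
  case (Suc k)
  then have "scl (-1) (scl ((-1) ^ k) x) \<in> Pin" using Pin_neg by blast
  moreover have "scl (-1) (scl ((-1) ^ k) x) = scl ((-1) ^ Suc k) x" by simp
  ultimately show ?case by metis
qed simp

lemma pin_rho_mult: "x \<in> Pin \<Longrightarrow> y \<in> Pin \<Longrightarrow> pin_rho (x \<star> y) = pin_rho x \<circ> pin_rho y"
  by (auto simp: Pin_iff pinprod_append[symmetric] pin_rho_pinprod rlist_append)

lemma pin_rho_neg: "x \<in> Pin \<Longrightarrow> pin_rho (scl (-1) x) = pin_rho x"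
proof -
  assume "x \<in> Pin"
  then obtain us where u: "unitlist us" "x = pinprod us" by (auto simp: Pin_iff)
  have "pin_rho (scl (-1) x) = rlist (e0 # e0 # us)"
    unfolding u neg_pinprod by (rule pin_rho_pinprod) (simp add: u)
  also have "\<dots> = pin_rho x" using u by (simp only: rlist_neg pin_rho_pinprod)
  finally show ?thesis .
qed

lemma pin_rho_one: "pin_rho cl_one = id"
  using pin_rho_pinprod[of "[]"] by simp

lemma Pin_inv:
  assumes "x \<in> Pin"
  shows "\<exists>y\<in>Pin. x \<star> y = cl_one \<and> y \<star> x = cl_one"
proof -
  obtain us where us: "unitlist us" "x = pinprod us" using assms Pin_iff by blast
  let ?y = "scl ((-1) ^ length us) (pinprod (rev us))"
  have "?y \<in> Pin" by (rule Pin_sign) (auto simp: Pin_iff us intro: exI[of _ "rev us"])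
  moreover have "x \<star> ?y = cl_one \<and> ?y \<star> x = cl_one"
    by (simp add: us scl_mult_right scl_mult_left pinprod_rev pinprod_rev' flip: power_add)
  ultimately show ?thesis by blast
qed


definition cnorm :: "'d::finite cliff \<Rightarrow> real" where
  "cnorm x = (\<Sum>K\<in>UNIV. (x K)\<^sup>2)"

lemma sq_lemma: "s * s = (1::real) \<Longrightarrow> (p * s * q) * (p * s * q) = (p * p) * q\<^sup>2"
proof -
  assume h: "s * s = 1"
  have "(p * s * q) * (p * s * q) = (p * p) * (s * s) * (q * q)" by algebra
  then show ?thesis using h by (simp add: power2_eq_square)
qed

lemma neg_lemma: "c1 * c2 = - (c3 * (c4::real)) \<Longrightarrow>
   (p * c1 * q) * (r * c2 * t) = - ((p * c3 * t) * (r * c4 * q))"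
proof -
  assume h: "c1 * c2 = - (c3 * c4)"
  have "(p * c1 * q) * (r * c2 * t) = (p * q * r * t) * (c1 * c2)" by algebra
  also have "\<dots> = (p * q * r * t) * (- (c3 * c4))" by (simp only: h)
  also have "\<dots> = - ((p * c3 * t) * (r * c4 * q))" by algebra
  finally show ?thesis .
qed

lemma cnorm_vec:
  fixes u :: "(real,'d::{finite,linorder}) vec"
  shows "cnorm (vec_cl u \<star> y) = (u \<bullet> u) * cnorm y"
proof -
  define a where "a i K = u$i * cl_sign {i} (symdiff {i} K) * y (symdiff {i} K)" for i K
  have "cnorm (vec_cl u \<star> y) = (\<Sum>K\<in>UNIV. \<Sum>i\<in>UNIV. \<Sum>j\<in>UNIV. a i K * a j K)"
    unfolding cnorm_def vec_mult_apply a_def[symmetric] power2_eq_square sum_product ..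
  also have "\<dots> = (\<Sum>i\<in>UNIV. \<Sum>K\<in>UNIV. \<Sum>j\<in>UNIV. a i K * a j K)"
    by (rule sum.swap)
  also have "\<dots> = (\<Sum>i\<in>UNIV. \<Sum>j\<in>UNIV. \<Sum>K\<in>UNIV. a i K * a j K)"
    by (rule sum.cong[OF refl], rule sum.swap)
  also have "\<dots> = (\<Sum>i\<in>UNIV. \<Sum>j\<in>UNIV. if i = j then (u$i * u$i) * cnorm y else 0)"
  proof (intro sum.cong refl)
    fix i j :: 'd
    show "(\<Sum>K\<in>UNIV. a i K * a j K) = (if i = j then (u$i * u$i) * cnorm y else 0)"
    proof (cases "i = j")
      case True
      have "(\<Sum>K\<in>UNIV. a i K * a i K) = (\<Sum>K\<in>UNIV. (u$i * u$i) * (y (symdiff {i} K))\<^sup>2)"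
      proof (intro sum.cong refl)
        fix K
        have s: "cl_sign {i} (symdiff {i} K) * cl_sign {i} (symdiff {i} K) = 1" by simp
        show "a i K * a i K = (u$i * u$i) * (y (symdiff {i} K))\<^sup>2"
          unfolding a_def by (rule sq_lemma[OF s])
      qed
      also have "\<dots> = (\<Sum>K\<in>UNIV. (u$i * u$i) * (y K)\<^sup>2)"
        by (rule sum_symdiff_reindex[symmetric])
      finally show ?thesis using True by (simp add: cnorm_def sum_distrib_left)
    next
      case False
      define D where "D = symdiff {i} {j}"
      have neg: "a i (symdiff D K) * a j (symdiff D K) = - (a i K * a j K)" for K
      proof -
        have e1: "symdiff {i} (symdiff D K) = symdiff {j} K"
          and e2: "symdiff {j} (symdiff D K) = symdiff {i} K"
          by (auto simp: D_def symdiff_def)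
        have sg: "cl_sign {i} (symdiff {j} K) * cl_sign {j} (symdiff {i} K) =
            - (cl_sign {i} (symdiff {i} K) * cl_sign {j} (symdiff {j} K))"
        proof -
          have "cl_sign {i} (symdiff {j} K) * cl_sign {j} (symdiff {i} K) =
              (cl_sign {i} {j} * cl_sign {j} {i}) * (cl_sign {i} K * cl_sign {j} K)"
            by (simp add: cl_sign_symdiff2 mult_ac)
          also have "\<dots> = - (cl_sign {i} K * cl_sign {j} K)"
            using cl_sign_single_swap[OF False] by simp
          also have "\<dots> = - (cl_sign {i} (symdiff {i} K) * cl_sign {j} (symdiff {j} K))"
            by (simp add: cl_sign_symdiff2 mult_ac)
          finally show ?thesis .
        qed
        show ?thesis unfolding a_def e1 e2 by (rule neg_lemma[OF sg])
      qed
      have "(\<Sum>K\<in>UNIV. a i K * a j K) = (\<Sum>K\<in>UNIV. a i (symdiff D K) * a j (symdiff D K))"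
        by (rule sum_symdiff_reindex)
      also have "\<dots> = - (\<Sum>K\<in>UNIV. a i K * a j K)"
        by (simp add: neg sum_negf)
      finally have "(\<Sum>K\<in>UNIV. a i K * a j K) = 0" by simp
      then show ?thesis using False by simp
    qed
  qed
  also have "\<dots> = (u \<bullet> u) * cnorm y"
    by (simp add: inner_vec_def sum_distrib_right)
  finally show ?thesis .
qed

lemma cnorm_pinprod: fixes us :: "(real,'d::{finite,linorder}) vec list"
  shows "unitlist us \<Longrightarrow> cnorm (pinprod us) = 1"
proof (induct us)
  case Nil
  have "cnorm (cl_one :: 'd cliff) = (\<Sum>K\<in>UNIV. if K = ({}::'d set) then 1 else 0)"
    unfolding cnorm_def cl_one_def by (intro sum.cong refl) auto
  then show ?case by simp
next
  case (Cons u us)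
  then show ?case by (simp add: cnorm_vec norm_eq_1[symmetric])
qed

lemma cnorm_scl_one: "cnorm (scl c (cl_one :: 'd::finite cliff)) = c\<^sup>2"
proof -
  have "cnorm (scl c (cl_one :: 'd cliff)) = (\<Sum>K\<in>UNIV. if K = ({}::'d set) then c\<^sup>2 else 0)"
    unfolding cnorm_def cl_one_def scl_def by (intro sum.cong refl) auto
  then show ?thesis by simp
qed

lemma sign_comm:
  fixes J :: "'d::{finite,linorder} set"
  shows "cl_sign {i} J * cl_sign J {i} = (-1) ^ card (J - {i})"
proof -
  have c1: "card (invp {i} J) = card {j\<in>J. j < i}"
    by (rule bij_betw_same_card[of snd]) (auto simp: bij_betw_def inj_on_def invp_def image_def)
  have c2: "card (invp J {i}) = card {j\<in>J. i < j}"
    by (rule bij_betw_same_card[of fst]) (auto simp: bij_betw_def inj_on_def invp_def image_def)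
  have u: "J - {i} = {j\<in>J. j < i} \<union> {j\<in>J. i < j}" by auto
  have c3: "card (J - {i}) = card {j\<in>J. j < i} + card {j\<in>J. i < j}"
    unfolding u by (rule card_Un_disjoint) auto
  have "cl_sign {i} J * cl_sign J {i} =
     (-1) ^ (card (invp {i} J) + card (invp J {i})) * ((-1) ^ card ({i} \<inter> J))\<^sup>2"
    by (simp add: cl_sign_alt power_add power2_eq_square Int_commute mult_ac)
  also have "\<dots> = (-1) ^ card (J - {i})" by (simp add: c1 c2 c3)
  finally show ?thesis .
qed

lemma pin_kernel:
  assumes "x \<in> Pin" "pin_rho x = id"
  shows "x = cl_one \<or> x = scl (-1) cl_one"
proof -
  obtain us where us: "unitlist us" "x = pinprod us" using assms Pin_iff by blast
  define s :: real where "s = (-1) ^ length us"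
  have rl: "rlist us = id" using assms us pin_rho_pinprod by metis
  have comm: "scl s (x \<star> vec_cl v) = vec_cl v \<star> x" for v
  proof -
    have "vec_cl v \<star> x = (x \<star> vec_cl v \<star> pinprod (rev us)) \<star> x"
      using conj_pinprod[OF us(1), of v] rl us by simp
    also have "\<dots> = x \<star> vec_cl v \<star> (pinprod (rev us) \<star> pinprod us)"
      by (simp add: us cl_assoc)
    also have "\<dots> = scl s (x \<star> vec_cl v)"
      by (simp add: pinprod_rev' us s_def scl_mult_right)
    finally show ?thesis by simp
  qed
  have supp: "J = {}" if J: "x J \<noteq> 0" for J
  proof (rule ccontr)
    assume "J \<noteq> {}"
    then obtain i where iJ: "i \<in> J" by blast
    define K where "K = symdiff {i} J"
    have sK: "symdiff {i} K = J" "symdiff K {i} = J" by (auto simp: K_def symdiff_def)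
    have l: "(vec_cl (axis i 1) \<star> x) K = cl_sign {i} J * x J"
    proof -
      have "(vec_cl (axis i 1) \<star> x) K = (\<Sum>j\<in>UNIV. if j = i then cl_sign {i} J * x J else 0)"
        unfolding vec_mult_apply sK by (intro sum.cong refl) (auto simp: axis_def sK)
      then show ?thesis by simp
    qed
    have r: "(x \<star> vec_cl (axis i 1)) K = cl_sign J {i} * x J"
    proof -
      have "(x \<star> vec_cl (axis i 1)) K = (\<Sum>j\<in>UNIV. if j = i then cl_sign J {i} * x J else 0)"
        unfolding mult_vec_apply sK by (intro sum.cong refl) (auto simp: axis_def sK)
      then show ?thesis by simp
    qed
    have "s * (cl_sign J {i} * x J) = cl_sign {i} J * x J"
      using fun_cong[OF comm[of "axis i 1"], of K] l r by (simp add: scl_def)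
    then have e: "s * cl_sign J {i} = cl_sign {i} J" using J by simp
    have "s = s * cl_sign J {i} * cl_sign J {i}" by (simp add: mult.assoc)
    also have "\<dots> = (-1) ^ card (J - {i})" unfolding e by (rule sign_comm)
    finally have s1: "s = (-1) ^ card (J - {i})" .
    have s2: "s = (-1) ^ card J" using pinprod_parity[of us J] J us by (simp add: s_def)
    have "card J = Suc (card (J - {i}))"
      using card_Suc_Diff1[of J i] iJ by simp
    then have "s = - s" using s1 s2 by simp
    then show False using s2 by simp
  qed
  have xs: "x = scl (x {}) cl_one"
  proof (rule ext)
    fix K show "x K = scl (x {}) cl_one K"
      using supp[of K] by (cases "K = {}") (auto simp: scl_def cl_one_def)
  qed
  have "cnorm x = 1" using cnorm_pinprod us by blast
  moreover note cnorm_scl_one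
  ultimately have "(x {})\<^sup>2 = 1" using xs by metis
  then have "x {} = 1 \<or> x {} = -1" by (simp add: power2_eq_1_iff)
  then show ?thesis using xs by auto
qed

lemma pin_same_rho:
  assumes "a \<in> Pin" "b \<in> Pin" "pin_rho a = pin_rho b"
  shows "a = b \<or> a = scl (-1) b"
proof -
  obtain b' where b': "b' \<in> Pin" "b \<star> b' = cl_one" "b' \<star> b = cl_one" using Pin_inv assms(2) by blast
  have "pin_rho (a \<star> b') = pin_rho b \<circ> pin_rho b'" using assms b' by (simp add: pin_rho_mult)
  also have "\<dots> = pin_rho (b \<star> b')" by (rule pin_rho_mult[OF assms(2) b'(1), symmetric])
  also have "\<dots> = id" using b' pin_rho_one by simp
  finally have "a \<star> b' = cl_one \<or> a \<star> b' = scl (-1) cl_one"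
    using pin_kernel Pin_mult assms b' by blast
  moreover have "a = (a \<star> b') \<star> b" using b' by (simp add: cl_assoc)
  ultimately show ?thesis by (auto simp: scl_mult_left)
qed


lemma rlist_orth:
  assumes "unitlist us" "distinct us" "pairwise orthogonal (set us)"
  shows "rlist us v = v - 2 *\<^sub>R (\<Sum>b\<in>set us. (b \<bullet> v) *\<^sub>R b)"
  using assms
proof (induct us)
  case Nil then show ?case by simp
next
  case (Cons u us)
  define w where "w = v - 2 *\<^sub>R (\<Sum>b\<in>set us. (b \<bullet> v) *\<^sub>R b)"
  have IH: "rlist us v = w" using Cons by (simp add: w_def pairwise_insert)
  have orth: "u \<bullet> b = 0" if "b \<in> set us" for b
    using Cons.prems that by (auto simp: pairwise_insert orthogonal_def)
  have "u \<bullet> w = u \<bullet> v"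
    by (simp add: w_def inner_diff_right inner_sum_right orth)
  then have "rlist (u # us) v = w - (2 * (u \<bullet> v)) *\<^sub>R u"
    by (simp add: IH refl_def)
  also have "\<dots> = v - 2 *\<^sub>R (\<Sum>b\<in>set (u # us). (b \<bullet> v) *\<^sub>R b)"
    using Cons.prems by (simp add: w_def algebra_simps scaleR_sum_right)
  finally show ?case .
qed

lemma orthonormal_expand:
  fixes B :: "(real,'d::finite) vec set"
  assumes "finite B" "pairwise orthogonal B" "\<And>b. b \<in> B \<Longrightarrow> norm b = 1" "m \<in> span B"
  shows "(\<Sum>b\<in>B. (b \<bullet> m) *\<^sub>R b) = m"
proof -
  define r where "r = m - (\<Sum>b\<in>B. (b \<bullet> m) *\<^sub>R b)"
  have rs: "r \<in> span B" unfolding r_def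
    by (intro span_diff assms span_sum span_mul span_base)
  have "orthogonal r b" if "b \<in> B" for b
  proof -
    have "(\<Sum>b'\<in>B. (b' \<bullet> m) * (b' \<bullet> b)) = (\<Sum>b'\<in>B. if b' = b then b \<bullet> m else 0)"
    proof (intro sum.cong refl)
      fix b' assume "b' \<in> B"
      then show "(b' \<bullet> m) * (b' \<bullet> b) = (if b' = b then b \<bullet> m else 0)"
        using assms(2,3) that by (auto simp: pairwise_def orthogonal_def norm_eq_1)
    qed
    moreover have "r \<bullet> b = m \<bullet> b - (\<Sum>b'\<in>B. (b' \<bullet> m) * (b' \<bullet> b))"
      by (simp add: r_def inner_diff_left inner_sum_left)
    ultimately have "r \<bullet> b = 0" using that assms(1)
      by (simp add: inner_commute)
    then show ?thesis by (simp add: orthogonal_def)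
  qed
  then have "orthogonal r r" using orthogonal_to_span[OF rs] by blast
  then have "r = 0" by (simp add: orthogonal_def)
  then show ?thesis by (simp add: r_def)
qed

lemma involution_lift:
  fixes T :: "(real,'d::{finite,linorder}) vec \<Rightarrow> (real,'d) vec"
  assumes T: "orthogonal_transformation T" and TT: "\<And>v. T (T v) = v"
  shows "\<exists>us. unitlist us \<and> rlist us = T"
proof -
  have lin: "linear T" using T by (simp add: orthogonal_transformation_def)
  define W where "W = {v. T v + v = 0}"
  have sW: "subspace W"
    unfolding subspace_def W_def
    by (auto simp: linear_add[OF lin] linear_scale[OF lin] linear_0[OF lin] algebra_simps
        simp flip: scaleR_right_distrib)
  obtain B where B: "B \<subseteq> W" "pairwise orthogonal B" "\<And>x. x \<in> B \<Longrightarrow> norm x = 1"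
      "independent B" "span B = W"
    using orthonormal_basis_subspace[OF sW] by metis
  have fB: "finite B" using B(4) independent_imp_finite by blast
  obtain us where us: "set us = B" "distinct us" using finite_distinct_list[OF fB] by blast
  have ul: "unitlist us" using us B(3) by (auto simp: unitlist_def)
  have "rlist us v = T v" for v
  proof -
    define m where "m = (1/2) *\<^sub>R (v - T v)"
    have mW: "m \<in> W" unfolding W_def m_def
      using TT by (simp add: linear_scale[OF lin] linear_diff[OF lin] algebra_simps)
    have vm: "v - m = (1/2) *\<^sub>R (v + T v)" by (simp add: vec_eq_iff m_def algebra_simps)
    have p: "T (v - m) = v - m"
      unfolding vm using TT by (simp add: linear_scale[OF lin] linear_add[OF lin] add.commute)
    have bv: "b \<bullet> v = b \<bullet> m" if "b \<in> B" for b
    proof -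
      have bW: "T b = - b" using B(1) that by (auto simp: W_def eq_neg_iff_add_eq_0)
      have "b \<bullet> (v - m) = T b \<bullet> T (v - m)" using T by (simp add: orthogonal_transformation_def)
      also have "\<dots> = - (b \<bullet> (v - m))" using bW p by simp
      finally have "b \<bullet> (v - m) = 0" by simp
      then show ?thesis by (simp add: inner_diff_right)
    qed
    have "rlist us v = v - 2 *\<^sub>R (\<Sum>b\<in>B. (b \<bullet> m) *\<^sub>R b)"
      using rlist_orth[OF ul us(2)] B(2) us(1) bv by simp
    also have "\<dots> = v - 2 *\<^sub>R m"
      using orthonormal_expand[OF fB B(2) B(3)] mW B(5) by simp
    also have "\<dots> = T v" by (simp add: m_def vec_eq_iff algebra_simps)
    finally show ?thesis .
  qed
  then show ?thesis using ul by blast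
qed


locale cox =
  fixes mul :: "'a \<Rightarrow> 'a \<Rightarrow> 'a" (infixl "\<diamond>" 70) and one :: 'a and y :: "nat \<Rightarrow> 'a" and N :: nat
  assumes assoc: "(a \<diamond> b) \<diamond> c = a \<diamond> (b \<diamond> c)"
    and lone[simp]: "one \<diamond> a = a" and rone[simp]: "a \<diamond> one = a"
    and sq: "1 \<le> i \<Longrightarrow> i < N \<Longrightarrow> y i \<diamond> y i = one"
    and comm: "1 \<le> i \<Longrightarrow> i + 2 \<le> j \<Longrightarrow> j < N \<Longrightarrow> y i \<diamond> y j = y j \<diamond> y i"
    and braid: "1 \<le> i \<Longrightarrow> i + 1 < N \<Longrightarrow> y i \<diamond> y (Suc i) \<diamond> y i = y (Suc i) \<diamond> y i \<diamond> y (Suc i)"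
begin

inductive_set M :: "nat \<Rightarrow> 'a set" for m where
  M_one: "one \<in> M m"
| M_step: "a \<in> M m \<Longrightarrow> 1 \<le> i \<Longrightarrow> i \<le> m \<Longrightarrow> a \<diamond> y i \<in> M m"

lemma M_mult: assumes a: "a \<in> M m" shows "b \<in> M m \<Longrightarrow> a \<diamond> b \<in> M m"
proof (induct rule: M.induct)
  case M_one then show ?case using a by simp
next
  case (M_step b i)
  then have "a \<diamond> b \<diamond> y i \<in> M m" by (intro M.M_step) auto
  then show ?case by (simp add: assoc)
qed

fun D :: "nat \<Rightarrow> nat \<Rightarrow> 'a" where
  "D b 0 = one"
| "D b (Suc l) = y (b + l) \<diamond> D b l"

lemma D_split: "D b (l1 + l2) = D (b + l1) l2 \<diamond> D b l1"
  by (induct l2) (simp_all add: assoc add.assoc)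

lemma D_peel: "D b (Suc l) = D (Suc b) l \<diamond> y b"
  using D_split[of b 1 l] by simp

lemma D_comm:
  assumes "1 \<le> i" "i < N" "1 \<le> b" "b + l \<le> N"
    and "\<And>j. b \<le> j \<Longrightarrow> j < b + l \<Longrightarrow> i + 2 \<le> j \<or> j + 2 \<le> i"
  shows "y i \<diamond> D b l = D b l \<diamond> y i"
  using assms
proof (induct l)
  case 0 then show ?case by simp
next
  case (Suc l)
  have IH: "y i \<diamond> D b l = D b l \<diamond> y i" using Suc by auto
  have c: "y i \<diamond> y (b + l) = y (b + l) \<diamond> y i"
  proof -
    have "i + 2 \<le> b + l \<or> b + l + 2 \<le> i" using Suc.prems(5)[of "b + l"] by simp
    then show ?thesis
    proof
      assume "i + 2 \<le> b + l"
      then show ?thesis using comm[of i "b + l"] Suc.prems by simp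
    next
      assume "b + l + 2 \<le> i"
      then show ?thesis using comm[of "b + l" i] Suc.prems by simp
    qed
  qed
  have "y i \<diamond> D b (Suc l) = (y i \<diamond> y (b + l)) \<diamond> D b l" by (simp add: assoc)
  also have "\<dots> = y (b + l) \<diamond> (y i \<diamond> D b l)" by (simp add: c assoc)
  also have "\<dots> = D b (Suc l) \<diamond> y i" by (simp add: IH assoc)
  finally show ?case .
qed

definition C :: "nat \<Rightarrow> 'a set" where
  "C m = (\<Union>k\<in>{1..m+1}. (\<lambda>h. h \<diamond> D k (m + 1 - k)) ` M (m - 1))"

lemma C_step:
  assumes m: "1 \<le> m" "m < N" and z: "z \<in> C m" and i: "1 \<le> i" "i \<le> m"
  shows "z \<diamond> y i \<in> C m"
proof -
  obtain k h where k: "1 \<le> k" "k \<le> m + 1" and h: "h \<in> M (m - 1)" and zk: "z = h \<diamond> D k (m + 1 - k)"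
    using z by (auto simp: C_def)
  define L where "L = m + 1 - k"
  have inC: "h' \<diamond> D k' (m + 1 - k') \<in> C m" if "h' \<in> M (m - 1)" "1 \<le> k'" "k' \<le> m + 1" for h' k'
    using that by (auto simp: C_def)
  consider (a) "i + 1 < k" | (b) "i + 1 = k" | (c) "i = k" | (d) "k < i" by linarith
  then show ?thesis
  proof cases
    case a
    have "y i \<diamond> D k L = D k L \<diamond> y i"
      by (rule D_comm) (use m i a k in \<open>auto simp: L_def\<close>)
    then have "z \<diamond> y i = (h \<diamond> y i) \<diamond> D k (m + 1 - k)"
      by (simp add: zk assoc L_def)
    moreover have "h \<diamond> y i \<in> M (m - 1)" using h i a k by (intro M.M_step) auto
    ultimately show ?thesis using inC k by auto
  next
    case b
    have "z \<diamond> y i = h \<diamond> D i (m + 1 - i)"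
    proof -
      have "m + 1 - i = Suc (m + 1 - k)" using b k by simp
      moreover have "D i (Suc (m + 1 - k)) = D (Suc i) (m + 1 - k) \<diamond> y i" by (rule D_peel)
      ultimately have "D i (m + 1 - i) = D k (m + 1 - k) \<diamond> y i" using b by simp
      then show ?thesis by (simp add: zk assoc)
    qed
    then show ?thesis using inC[OF h, of i] i by simp
  next
    case c
    have "D k (m + 1 - k) = D (Suc k) (m - k) \<diamond> y k"
      using c i by (metis D_peel Suc_diff_le add.commute plus_1_eq_Suc)
    then have "z \<diamond> y i = h \<diamond> D (Suc k) (m + 1 - Suc k)"
      using c i m by (simp add: zk assoc sq)
    then show ?thesis using inC[OF h, of "Suc k"] c i by simp
  next
    case d
    define l1 where "l1 = i - 1 - k"
    define l3 where "l3 = m - i"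
    have Lsplit: "m + 1 - k = l1 + 2 + l3" using d i by (simp add: l1_def l3_def)
    have bi: "k + l1 = i - 1" using d by (simp add: l1_def)
    have D2: "D (i - 1) 2 = y i \<diamond> y (i - 1)"
      using d by (simp add: numeral_2_eq_2)
    have Dk: "D k (m + 1 - k) = D (i + 1) l3 \<diamond> (y i \<diamond> y (i - 1)) \<diamond> D k l1"
    proof -
      have "D k (m + 1 - k) = D (k + (l1 + 2)) l3 \<diamond> D k (l1 + 2)"
        unfolding Lsplit by (rule D_split)
      also have "D k (l1 + 2) = D (k + l1) 2 \<diamond> D k l1" by (rule D_split)
      also have "k + (l1 + 2) = i + 1" using d by (simp add: l1_def)
      finally show ?thesis using D2 bi by (simp add: assoc)
    qed
    have c1: "y i \<diamond> D k l1 = D k l1 \<diamond> y i"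
      by (rule D_comm) (use m i d k in \<open>auto simp: l1_def\<close>)
    have c2: "y (i - 1) \<diamond> D (i + 1) l3 = D (i + 1) l3 \<diamond> y (i - 1)"
      by (rule D_comm) (use m i d k in \<open>auto simp: l3_def\<close>)
    have br: "y i \<diamond> y (i - 1) \<diamond> y i = y (i - 1) \<diamond> y i \<diamond> y (i - 1)"
      using braid[of "i - 1"] d k m i by simp
    have "D k (m + 1 - k) \<diamond> y i = D (i + 1) l3 \<diamond> (y i \<diamond> y (i - 1) \<diamond> y i) \<diamond> D k l1"
      unfolding Dk by (simp add: assoc c1[symmetric])
    also have "\<dots> = D (i + 1) l3 \<diamond> y (i - 1) \<diamond> (y i \<diamond> y (i - 1)) \<diamond> D k l1"
      unfolding br by (simp add: assoc)
    also have "\<dots> = (D (i + 1) l3 \<diamond> y (i - 1)) \<diamond> (y i \<diamond> y (i - 1) \<diamond> D k l1)"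
      by (simp add: assoc)
    also have "\<dots> = (y (i - 1) \<diamond> D (i + 1) l3) \<diamond> (y i \<diamond> y (i - 1) \<diamond> D k l1)"
      by (simp only: c2)
    also have "\<dots> = y (i - 1) \<diamond> D k (m + 1 - k)"
      unfolding Dk by (simp add: assoc)
    finally have "z \<diamond> y i = (h \<diamond> y (i - 1)) \<diamond> D k (m + 1 - k)"
      by (simp add: zk assoc)
    moreover have "h \<diamond> y (i - 1) \<in> M (m - 1)" using h i d k by (intro M.M_step) auto
    ultimately show ?thesis using inC k by auto
  qed
qed

lemma M_card: "m < N \<Longrightarrow> finite (M m) \<and> card (M m) \<le> fact (m + 1)"
proof (induct m)
  case 0
  have "M 0 = {one}"
  proof
    show "M 0 \<subseteq> {one}"
    proof
      fix a assume "a \<in> M 0" then show "a \<in> {one}" by (induct rule: M.induct) auto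
    qed
  qed (auto intro: M.M_one)
  then show ?case by simp
next
  case (Suc m)
  have IH: "finite (M m)" "card (M m) \<le> fact (m + 1)" using Suc by auto
  have sub: "M (Suc m) \<subseteq> C (Suc m)"
  proof
    fix a assume "a \<in> M (Suc m)"
    then show "a \<in> C (Suc m)"
    proof (induct rule: M.induct)
      case M_one
      have "one \<diamond> D (Suc m + 1) (Suc m + 1 - (Suc m + 1)) \<in> C (Suc m)"
        unfolding C_def by (rule UN_I[of "Suc m + 1"]) (auto intro: M.M_one)
      then show ?case by simp
    next
      case (M_step a i)
      then show ?case using C_step[of "Suc m" a i] Suc.prems by auto
    qed
  qed
  have fC: "finite (C (Suc m))" using IH by (simp add: C_def)
  have "card (C (Suc m)) \<le> (\<Sum>k\<in>{1..Suc m + 1}. card ((\<lambda>h. h \<diamond> D k (Suc m + 1 - k)) ` M m))"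
    unfolding C_def diff_Suc_1 by (rule card_UN_le) simp
  also have "\<dots> \<le> (\<Sum>k\<in>{1..Suc m + 1}. card (M m))"
    by (intro sum_mono card_image_le IH)
  also have "\<dots> = (Suc m + 1) * card (M m)" by simp
  also have "\<dots> \<le> (Suc m + 1) * fact (m + 1)" using IH(2) by (rule mult_le_mono2)
  also have "\<dots> = fact (Suc m + 1)" by (simp add: fact_Suc)
  finally show ?case using sub fC by (meson card_mono finite_subset order_trans)
qed

end


definition adj :: "nat \<Rightarrow> nat \<Rightarrow> nat" where
  "adj i = Transposition.transpose i (Suc i)"

lemma conj_transpose:
  assumes "bij g"
  shows "g \<circ> Transposition.transpose a b \<circ> inv' g = Transposition.transpose (g a) (g b)"
proof -
  have inj: "inj g" and surj: "surj g" using assms bij_is_inj bij_is_surj by auto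
  have "Transposition.transpose (g a) (g b) \<circ> g = g \<circ> Transposition.transpose (inv' g (g a)) (inv' g (g b))"
    by (rule transpose_comp_eq[OF assms])
  also have "\<dots> = g \<circ> Transposition.transpose a b" using inj by simp
  finally have e: "Transposition.transpose (g a) (g b) \<circ> g = g \<circ> Transposition.transpose a b" .
  have "g \<circ> Transposition.transpose a b \<circ> inv' g = Transposition.transpose (g a) (g b) \<circ> (g \<circ> inv' g)"
    by (simp add: e[symmetric] comp_assoc)
  also have "g \<circ> inv' g = id" using surj by (simp add: surj_iff)
  finally show ?thesis by (simp only: comp_id)
qed

lemma conj_comp: "bij g \<Longrightarrow> g \<circ> (a \<circ> b) \<circ> inv' g = (g \<circ> a \<circ> inv' g) \<circ> (g \<circ> b \<circ> inv' g)"
  by (simp add: fun_eq_iff bij_inv_eq_iff bij_is_inj bij_is_surj surj_f_inv_f)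

lemma adj_sq: "adj i \<circ> adj i = id"
  by (simp add: adj_def)

lemma adj_comm: "i + 2 \<le> j \<Longrightarrow> adj i \<circ> adj j = adj j \<circ> adj i"
  by (rule ext) (auto simp: adj_def Transposition.transpose_def)

lemma adj_braid: "adj i \<circ> adj (Suc i) \<circ> adj i = adj (Suc i) \<circ> adj i \<circ> adj (Suc i)"
  by (rule ext) (auto simp: adj_def Transposition.transpose_def)

lemma adj_cube: "(adj i \<circ> adj (Suc i)) \<circ> (adj i \<circ> adj (Suc i)) \<circ> (adj i \<circ> adj (Suc i)) = id"
  by (rule ext) (auto simp: adj_def Transposition.transpose_def)

lemma transp_carrier: "a \<in> {1..n} \<Longrightarrow> b \<in> {1..n} \<Longrightarrow> Transposition.transpose a b \<in> carrier (sym_group n)"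
  by (simp add: sym_group_carrier permutes_swap_id)

lemma adj_carrier: "1 \<le> i \<Longrightarrow> i < n \<Longrightarrow> adj i \<in> carrier (sym_group n)"
  unfolding adj_def by (rule transp_carrier) auto

lemma carrier_comp: "g \<in> carrier (sym_group n) \<Longrightarrow> h \<in> carrier (sym_group n) \<Longrightarrow> g \<circ> h \<in> carrier (sym_group n)"
  by (simp add: sym_group_carrier permutes_compose)

lemma carrier_inv: "g \<in> carrier (sym_group n) \<Longrightarrow> inv' g \<in> carrier (sym_group n)"
  by (simp add: sym_group_carrier permutes_inv)

lemma carrier_bij: "g \<in> carrier (sym_group n) \<Longrightarrow> bij g"
  by (simp add: sym_group_carrier permutes_bij)

lemma sub_mult[simp]: "mult ((sym_group n)\<lparr>carrier := X\<rparr>) = (\<circ>)"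
  by (simp add: sym_group_def)

lemma sub_carrier[simp]: "carrier ((sym_group n)\<lparr>carrier := X\<rparr>) = X"
  by simp

definition cube :: "'d::{finite,linorder} cliff \<Rightarrow> 'd cliff" where
  "cube w = w \<star> w \<star> w"

lemma Pin_idem: "e \<in> Pin \<Longrightarrow> e \<star> e = e \<Longrightarrow> e = cl_one"
proof -
  assume e: "e \<in> Pin" "e \<star> e = e"
  obtain e' where e': "e \<star> e' = cl_one" using Pin_inv[OF e(1)] by blast
  have "e = e \<star> (e \<star> e')" using e' by simp
  also have "\<dots> = e \<star> e'" by (simp add: cl_assoc[symmetric] e(2))
  finally show ?thesis using e' by simp
qed

locale sp =
  fixes n :: nat and \<pi> :: "(nat \<Rightarrow> nat) \<Rightarrow> (real, 'd::{finite,linorder}) vec \<Rightarrow> (real,'d) vec"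
  assumes n4: "n \<ge> 4" and rep: "real_rep (sym_group n) \<pi>"
begin

abbreviation "car \<equiv> carrier (sym_group n)"

lemma pi_mult: "g \<in> car \<Longrightarrow> h \<in> car \<Longrightarrow> \<pi> (g \<circ> h) = \<pi> g \<circ> \<pi> h"
  using rep by (simp add: real_rep_def sym_group_mult)

lemma pi_orth: "g \<in> car \<Longrightarrow> orthogonal_transformation (\<pi> g)"
  using rep by (simp add: real_rep_def)

lemma id_car: "id \<in> car"
  by (simp add: sym_group_carrier permutes_id)

lemma pi_id: "\<pi> id = id"
proof
  fix v
  have "\<pi> id (\<pi> id v) = \<pi> id v" using pi_mult[OF id_car id_car] by (metis comp_apply id_comp)
  then show "\<pi> id v = id v" using orthogonal_transformation_inj[OF pi_orth[OF id_car]]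
    by (simp add: inj_eq)
qed

lemma lift_transp:
  assumes "a \<in> {1..n}" "b \<in> {1..n}"
  shows "\<exists>x. x \<in> Pin \<and> pin_rho x = \<pi> (Transposition.transpose a b)"
proof -
  let ?t = "Transposition.transpose a b"
  have tc: "?t \<in> car" using assms by (rule transp_carrier)
  have "\<pi> ?t (\<pi> ?t v) = v" for v
    using pi_mult[OF tc tc] pi_id by (metis comp_apply id_apply transpose_comp_involutory)
  then obtain us where "unitlist us" "rlist us = \<pi> ?t"
    using involution_lift[OF pi_orth[OF tc]] by blast
  then show ?thesis by (intro exI[of _ "pinprod us"]) (auto simp: Pin_iff pin_rho_pinprod)
qed

lemma lift_exists:
  assumes "g \<in> car"
  shows "\<exists>x. x \<in> Pin \<and> pin_rho x = \<pi> g"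
proof -
  have "g permutes {1..n}" using assms by (simp add: sym_group_carrier)
  from this finite_atLeastAtMost[of 1 n] show ?thesis
  proof (induct rule: permutes_induct)
    case id then show ?case using pin_rho_one pi_id Pin_one by metis
  next
    case (swap a b p)
    obtain x where x: "x \<in> Pin" "pin_rho x = \<pi> p" using swap by blast
    obtain t where t: "t \<in> Pin" "pin_rho t = \<pi> (Transposition.transpose a b)"
      using lift_transp swap by blast
    have tc: "Transposition.transpose a b \<in> car" using swap by (intro transp_carrier) auto
    have pc: "p \<in> car" using swap by (simp add: sym_group_carrier)
    have "pin_rho (t \<star> x) = \<pi> (Transposition.transpose a b \<circ> p)"
      using x t by (simp add: pin_rho_mult pi_mult[OF tc pc])
    then show ?case using Pin_mult[OF t(1) x(1)] by blast
  qed
qed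

lemma inv_lift:
  assumes g: "g \<in> car" and z: "z \<in> Pin" "pin_rho z = \<pi> g"
  shows "\<exists>z'. z' \<in> Pin \<and> z \<star> z' = cl_one \<and> z' \<star> z = cl_one \<and> pin_rho z' = \<pi> (inv' g)"
proof -
  obtain z' where z': "z' \<in> Pin" "z \<star> z' = cl_one" "z' \<star> z = cl_one" using Pin_inv[OF z(1)] by blast
  have ig: "inv' g \<in> car" using g by (rule carrier_inv)
  have "g \<circ> inv' g = id" using carrier_bij[OF g] by (meson bij_is_surj surj_iff)
  then have a: "\<pi> g \<circ> \<pi> (inv' g) = id" using pi_mult[OF g ig] pi_id by simp
  have b: "\<pi> g \<circ> pin_rho z' = id" using pin_rho_mult[OF z(1) z'(1)] z'(2) z(2) pin_rho_one by metis
  have "pin_rho z' = \<pi> (inv' g)"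
  proof
    fix v
    have "\<pi> g (pin_rho z' v) = \<pi> g (\<pi> (inv' g) v)" using a b by (metis comp_apply id_apply)
    then show "pin_rho z' v = \<pi> (inv' g) v"
      using orthogonal_transformation_inj[OF pi_orth[OF g]] by (simp add: inj_eq)
  qed
  then show ?thesis using z' by blast
qed

lemma conj_lift:
  assumes g: "g \<in> car" and h: "h \<in> car" and t: "t \<in> Pin" "pin_rho t = \<pi> h" "t \<star> t = cl_one"
  shows "\<exists>q. q \<in> Pin \<and> pin_rho q = \<pi> (g \<circ> h \<circ> inv' g) \<and> q \<star> q = cl_one"
proof -
  obtain z where z: "z \<in> Pin" "pin_rho z = \<pi> g" using lift_exists[OF g] by blast
  obtain z' where z': "z' \<in> Pin" "z \<star> z' = cl_one" "z' \<star> z = cl_one" "pin_rho z' = \<pi> (inv' g)"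
    using inv_lift[OF g z] by blast
  define q where "q = z \<star> t \<star> z'"
  have qP: "q \<in> Pin" unfolding q_def by (intro Pin_mult z t z')
  have "pin_rho q = \<pi> g \<circ> \<pi> h \<circ> \<pi> (inv' g)"
    unfolding q_def using z t z' by (simp add: pin_rho_mult Pin_mult)
  also have "\<dots> = \<pi> (g \<circ> h \<circ> inv' g)"
    using g h carrier_inv[OF g] by (simp add: pi_mult carrier_comp)
  finally have r: "pin_rho q = \<pi> (g \<circ> h \<circ> inv' g)" .
  have "q \<star> q = z \<star> t \<star> (z' \<star> z) \<star> t \<star> z'" by (simp add: q_def cl_assoc)
  also have "\<dots> = z \<star> (t \<star> t) \<star> z'" by (simp add: z'(3) cl_assoc)
  also have "\<dots> = cl_one" by (simp add: t(3) z'(2))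
  finally show ?thesis using qP r by blast
qed

lemma extract_lift:
  assumes sp: "spinorial ((sym_group n)\<lparr>carrier := generate (sym_group n) {a}\<rparr>) \<pi>"
    and aa: "a \<circ> a = id"
  shows "\<exists>t. t \<in> Pin \<and> pin_rho t = \<pi> a \<and> t \<star> t = cl_one"
proof -
  let ?H = "generate (sym_group n) {a}"
  obtain ph where ph: "\<forall>g\<in>?H. ph g \<in> Pin" "\<forall>g\<in>?H. \<forall>h\<in>?H. ph (g \<circ> h) = ph g \<star> ph h"
    "\<forall>g\<in>?H. pin_rho (ph g) = \<pi> g"
    using sp unfolding spinorial_def by auto
  have aH: "a \<in> ?H" by (rule generate.incl) simp
  have iH: "id \<in> ?H" using generate.one[of "sym_group n" "{a}"] by (simp add: sym_group_one)
  have "ph id = ph id \<star> ph id" using ph(2) iH by (metis id_comp)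
  then have "ph id = cl_one" using Pin_idem ph(1) iH by metis
  moreover have "ph (a \<circ> a) = ph a \<star> ph a" using ph(2) aH by blast
  ultimately show ?thesis using aa ph aH by (intro exI[of _ "ph a"]) auto
qed

end


lemma sq_cancel: "a \<star> a = cl_one \<Longrightarrow> a \<star> (a \<star> z) = z"
  by (metis cl_assoc cl_one_left)

lemma scl_neg_sq: "scl (-1) b \<star> scl (-1) b = b \<star> b"
  by (simp add: scl_mult_left scl_mult_right)

locale sp2 = sp n \<pi> for n and \<pi> :: "(nat \<Rightarrow> nat) \<Rightarrow> (real, 'd::{finite,linorder}) vec \<Rightarrow> (real,'d) vec" +
  fixes t1 y0 :: "'d cliff"
  assumes t1: "t1 \<in> Pin" "pin_rho t1 = \<pi> (adj 1)" "t1 \<star> t1 = cl_one"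
    and y0: "y0 \<in> Pin" "pin_rho y0 = \<pi> (adj 1 \<circ> adj 3)" "y0 \<star> y0 = cl_one"
begin

lemma base_ex:
  assumes k: "1 \<le> k" "k < n"
  shows "\<exists>b. b \<in> Pin \<and> pin_rho b = \<pi> (adj k) \<and> b \<star> b = cl_one"
proof -
  define g where "g = Transposition.transpose 1 k \<circ> Transposition.transpose 2 (Suc k)"
  have gc: "g \<in> car" unfolding g_def using k n4
    by (intro carrier_comp transp_carrier) auto
  have a1: "adj 1 \<in> car" using n4 by (intro adj_carrier) auto
  have "g \<circ> adj 1 \<circ> inv' g = Transposition.transpose (g 1) (g (Suc 1))"
    unfolding adj_def by (rule conj_transpose[OF carrier_bij[OF gc]])
  also have "\<dots> = adj k" using k by (simp add: g_def adj_def Transposition.transpose_def)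
  finally show ?thesis using conj_lift[OF gc a1 t1] by metis
qed

definition base :: "nat \<Rightarrow> 'd cliff" where
  "base k = (SOME b. b \<in> Pin \<and> pin_rho b = \<pi> (adj k) \<and> b \<star> b = cl_one)"

lemma base: assumes "1 \<le> k" "k < n"
  shows "base k \<in> Pin \<and> pin_rho (base k) = \<pi> (adj k) \<and> base k \<star> base k = cl_one"
  using someI_ex[OF base_ex[OF assms]] unfolding base_def .

primrec X :: "nat \<Rightarrow> 'd cliff" where
  "X 0 = cl_one"
| "X (Suc k) = (if cube (X k \<star> base (Suc k)) = cl_one then base (Suc k) else scl (-1) (base (Suc k)))"

lemma X_props:
  assumes "1 \<le> k" "k < n"
  shows "X k \<in> Pin \<and> pin_rho (X k) = \<pi> (adj k) \<and> X k \<star> X k = cl_one"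
proof -
  obtain k' where k': "k = Suc k'" using assms by (cases k) auto
  show ?thesis using base[OF assms] unfolding k'
    by (auto simp: Pin_neg pin_rho_neg scl_neg_sq)
qed

lemma X_cube:
  assumes i: "1 \<le> i" "Suc i < n"
  shows "cube (X i \<star> X (Suc i)) = cl_one"
proof -
  have i1: "1 \<le> Suc i" "Suc i < n" "i < n" using i by auto
  define b where "b = base (Suc i)"
  define w where "w = X i \<star> b"
  have Xi: "X i \<in> Pin" "pin_rho (X i) = \<pi> (adj i)" using X_props[OF i(1) i1(3)] by auto
  have bb: "b \<in> Pin" "pin_rho b = \<pi> (adj (Suc i))" using base[OF i1(1,2)] by (auto simp: b_def)
  have wP: "w \<in> Pin" unfolding w_def using Xi bb by (rule_tac Pin_mult) auto
  have ac: "adj i \<in> car" "adj (Suc i) \<in> car" using i by (auto intro: adj_carrier)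
  define c where "c = adj i \<circ> adj (Suc i)"
  have cc: "c \<in> car" unfolding c_def using ac by (rule carrier_comp)
  have rw: "pin_rho w = \<pi> c" unfolding w_def c_def using Xi bb ac by (simp add: pin_rho_mult pi_mult)
  have "pin_rho (cube w) = \<pi> c \<circ> \<pi> c \<circ> \<pi> c"
    unfolding cube_def using wP rw by (simp add: pin_rho_mult Pin_mult)
  also have "\<dots> = \<pi> (c \<circ> c \<circ> c)" using cc by (simp add: pi_mult carrier_comp)
  also have "c \<circ> c \<circ> c = id" unfolding c_def by (rule adj_cube)
  finally have "pin_rho (cube w) = \<pi> id" .
  then have "pin_rho (cube w) = id" by (simp only: pi_id)
  moreover have "cube w \<in> Pin" unfolding cube_def using wP by (intro Pin_mult)
  ultimately have cw: "cube w = cl_one \<or> cube w = scl (-1) cl_one" using pin_kernel by blast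
  show ?thesis
  proof (cases "cube w = cl_one")
    case True
    then show ?thesis by (simp add: w_def b_def)
  next
    case False
    then have cw': "cube w = scl (-1) cl_one" using cw by blast
    have "X (Suc i) = scl (-1) b" using False by (simp add: w_def b_def)
    then have "cube (X i \<star> X (Suc i)) = scl (-1) (cube w)"
      by (simp add: cube_def w_def scl_mult_left scl_mult_right)
    then show ?thesis using cw' by simp
  qed
qed

lemma X_braid:
  assumes i: "1 \<le> i" "Suc i < n"
  shows "X i \<star> X (Suc i) \<star> X i = X (Suc i) \<star> X i \<star> X (Suc i)"
proof -
  let ?a = "X i" and ?b = "X (Suc i)"
  have aa: "?a \<star> ?a = cl_one" using X_props[of i] i by auto
  have bb: "?b \<star> ?b = cl_one" using X_props[of "Suc i"] i by auto
  have "cube (?a \<star> ?b) \<star> (?b \<star> ?a \<star> ?b) = ?a \<star> ?b \<star> ?a"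
    by (simp add: cube_def cl_assoc sq_cancel[OF aa] sq_cancel[OF bb] aa bb del: X.simps)
  then show ?thesis using X_cube[OF i] by (simp del: X.simps)
qed

lemma X_comm:
  assumes ij: "1 \<le> i" "i + 2 \<le> j" "j < n"
  shows "X i \<star> X j = X j \<star> X i"
proof -
  define g where "g = Transposition.transpose 1 i \<circ> Transposition.transpose 2 (Suc i) \<circ>
      Transposition.transpose 3 j \<circ> Transposition.transpose 4 (Suc j)"
  have gc: "g \<in> car" unfolding g_def using ij n4
    by (intro carrier_comp transp_carrier) auto
  have a13: "adj 1 \<circ> adj 3 \<in> car" using n4 by (intro carrier_comp adj_carrier) auto
  have bg: "bij g" using gc by (rule carrier_bij)
  have "g \<circ> (adj 1 \<circ> adj 3) \<circ> inv' g = (g \<circ> adj 1 \<circ> inv' g) \<circ> (g \<circ> adj 3 \<circ> inv' g)"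
    by (rule conj_comp[OF bg])
  also have "\<dots> = Transposition.transpose (g 1) (g 2) \<circ> Transposition.transpose (g 3) (g 4)"
    unfolding adj_def using conj_transpose[OF bg] by (simp add: numeral_eq_Suc)
  also have "\<dots> = adj i \<circ> adj j" using ij by (simp add: g_def adj_def Transposition.transpose_def)
  finally obtain q where q: "q \<in> Pin" "pin_rho q = \<pi> (adj i \<circ> adj j)" "q \<star> q = cl_one"
    using conj_lift[OF gc a13 y0] by metis
  have Xi: "X i \<in> Pin" "pin_rho (X i) = \<pi> (adj i)" "X i \<star> X i = cl_one" using X_props[of i] ij by auto
  have Xj: "X j \<in> Pin" "pin_rho (X j) = \<pi> (adj j)" "X j \<star> X j = cl_one" using X_props[of j] ij by auto
  have ac: "adj i \<in> car" "adj j \<in> car" using ij by (auto intro: adj_carrier)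
  have p: "X i \<star> X j \<in> Pin" using Xi Xj by (intro Pin_mult) auto
  have "pin_rho (X i \<star> X j) = pin_rho q" using Xi Xj q ac by (simp add: pin_rho_mult pi_mult)
  then have "X i \<star> X j = q \<or> X i \<star> X j = scl (-1) q" using pin_same_rho[OF p q(1)] by blast
  then have abab: "(X i \<star> X j) \<star> (X i \<star> X j) = cl_one" using q(3) scl_neg_sq by metis
  have "X i \<star> ((X i \<star> X j) \<star> (X i \<star> X j)) \<star> X j = X j \<star> X i"
    by (simp add: cl_assoc sq_cancel[OF Xi(3)] sq_cancel[OF Xj(3)] Xi(3) Xj(3) del: X.simps)
  then show ?thesis using abab by (simp del: X.simps)
qed

end


context sp2 begin

definition pmul :: "((nat \<Rightarrow> nat) \<times> 'd cliff) \<Rightarrow> ((nat \<Rightarrow> nat) \<times> 'd cliff) \<Rightarrow> ((nat \<Rightarrow> nat) \<times> 'd cliff)" where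
  "pmul a b = (fst a \<circ> fst b, snd a \<star> snd b)"

definition py :: "nat \<Rightarrow> (nat \<Rightarrow> nat) \<times> 'd cliff" where
  "py i = (adj i, X i)"

lemma cox_inst: "cox pmul (id, cl_one) py n"
proof
  fix a b c :: "(nat \<Rightarrow> nat) \<times> 'd cliff"
  show "pmul (pmul a b) c = pmul a (pmul b c)" by (simp add: pmul_def comp_assoc cl_assoc)
  show "pmul (id, cl_one) a = a" by (simp add: pmul_def)
  show "pmul a (id, cl_one) = a" by (simp add: pmul_def)
next
  fix i :: nat assume "1 \<le> i" "i < n"
  then show "pmul (py i) (py i) = (id, cl_one)"
    using X_props[of i] by (simp add: pmul_def py_def adj_sq del: X.simps)
next
  fix i j :: nat assume "1 \<le> i" "i + 2 \<le> j" "j < n"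
  then show "pmul (py i) (py j) = pmul (py j) (py i)"
    using X_comm[of i j] adj_comm[of i j] by (simp add: pmul_def py_def del: X.simps)
next
  fix i :: nat assume "1 \<le> i" "i + 1 < n"
  then show "pmul (pmul (py i) (py (Suc i))) (py i) = pmul (pmul (py (Suc i)) (py i)) (py (Suc i))"
    using X_braid[of i] adj_braid[of i] by (simp add: pmul_def py_def del: X.simps)
qed

lemma main: "spinorial (sym_group n) \<pi>"
proof -
  interpret P: cox pmul "(id, cl_one)" py n by (rule cox_inst)
  define MS where "MS = P.M (n - 1)"
  have n1: "n - 1 < n" "n - 1 + 1 = n" using n4 by auto
  have fin: "finite MS" and cardMS: "card MS \<le> fact n"
    using P.M_card[OF n1(1)] unfolding MS_def n1(2) by auto
  have sub: "MS \<subseteq> {(g, x). g \<in> car \<and> x \<in> Pin \<and> pin_rho x = \<pi> g}"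
  proof
    fix a assume "a \<in> MS"
    then show "a \<in> {(g, x). g \<in> car \<and> x \<in> Pin \<and> pin_rho x = \<pi> g}"
      unfolding MS_def
    proof (induct rule: P.M.induct)
      case M_one
      then show ?case using id_car Pin_one pin_rho_one pi_id by simp
    next
      case (M_step a i)
      obtain g x where a: "a = (g, x)" by (cases a)
      have i: "1 \<le> i" "i < n" using M_step n4 by auto
      have ac: "adj i \<in> car" using i by (rule adj_carrier)
      have Xi: "X i \<in> Pin" "pin_rho (X i) = \<pi> (adj i)" using X_props[OF i] by auto
      have gx: "g \<in> car" "x \<in> Pin" "pin_rho x = \<pi> g" using M_step a by auto
      show ?case using gx Xi ac
        by (simp add: a pmul_def py_def carrier_comp Pin_mult pin_rho_mult pi_mult del: X.simps)
    qed
  qed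
  have closed: "pmul a b \<in> MS" if "a \<in> MS" "b \<in> MS" for a b
    using that unfolding MS_def by (rule P.M_mult)
  define A where "A = fst ` MS"
  have A_comp: "g \<circ> h \<in> A" if gh: "g \<in> A" "h \<in> A" for g h
  proof -
    obtain p q where pq: "p \<in> MS" "g = fst p" "q \<in> MS" "h = fst q" using gh unfolding A_def by blast
    then have "pmul p q \<in> MS" by (intro closed)
    moreover have "g \<circ> h = fst (pmul p q)" using pq by (simp add: pmul_def)
    ultimately show ?thesis unfolding A_def by blast
  qed
  have A_id: "id \<in> A"
  proof -
    have "(id, cl_one) \<in> MS" unfolding MS_def by (rule P.M_one)
    then show ?thesis by (force simp: A_def)
  qed
  have A_adj: "adj i \<in> A" if "1 \<le> i" "i < n" for i
  proof -
    have "pmul (id, cl_one) (py i) \<in> MS" unfolding MS_def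
      by (rule P.M_step[OF P.M_one]) (use that in auto)
    then show ?thesis by (force simp: A_def pmul_def py_def)
  qed
  have A_tr: "Transposition.transpose a (a + d + 1) \<in> A" if "1 \<le> a" "a + d + 1 \<le> n" for a d
    using that
  proof (induct d)
    case 0
    then show ?case using A_adj[of a] by (simp add: adj_def)
  next
    case (Suc d)
    define c where "c = a + d + 1"
    have t: "Transposition.transpose a c \<in> A" using Suc by (simp add: c_def)
    have ac: "adj c \<in> A" using Suc by (intro A_adj) (auto simp: c_def)
    have "adj c \<circ> Transposition.transpose a c \<circ> inv' (adj c) =
        Transposition.transpose (adj c a) (adj c c)"
      by (rule conj_transpose) (simp add: adj_def)
    also have "\<dots> = Transposition.transpose a (a + Suc d + 1)"
      by (simp add: adj_def c_def)
    finally have e: "adj c \<circ> Transposition.transpose a c \<circ> adj c = Transposition.transpose a (a + Suc d + 1)"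
      by (simp add: adj_def)
    show ?case unfolding e[symmetric] using A_comp t ac by blast
  qed
  have A_transp: "Transposition.transpose a b \<in> A" if "a \<in> {1..n}" "b \<in> {1..n}" "a \<noteq> b" for a b
  proof -
    have *: "Transposition.transpose a b \<in> A" if "a \<in> {1..n}" "b \<in> {1..n}" "a < b" for a b
      using A_tr[of a "b - a - 1"] that by auto
    show ?thesis
    proof (cases "a < b")
      case True then show ?thesis using * that by blast
    next
      case False then have "b < a" using that by simp
      then show ?thesis using *[of b a] that by (simp add: transpose_commute)
    qed
  qed
  have carA: "car \<subseteq> A"
  proof
    fix g assume "g \<in> car"
    then have "g permutes {1..n}" by (simp add: sym_group_carrier)
    from this finite_atLeastAtMost[of 1 n] show "g \<in> A"
    proof (induct rule: permutes_induct)
      case id then show ?case by (rule A_id)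
    next
      case (swap a b p)
      then show ?case using A_comp A_transp by blast
    qed
  qed
  have fstMS: "fst ` MS = car" using sub carA by (auto simp: A_def)
  have cc: "card car = fact n"
  proof -
    have "car = {p. p permutes {1..n}}" by (simp add: sym_group_def)
    then show ?thesis using card_permutations[of "{1..n}" n] by simp
  qed
  have "card (fst ` MS) = card MS"
    using card_image_le[OF fin, of fst] cardMS fstMS cc by simp
  then have inj: "inj_on fst MS" using fin eq_card_imp_inj_on by blast
  define ph where "ph g = (SOME x. (g, x) \<in> MS)" for g
  have phM: "(g, ph g) \<in> MS" if "g \<in> car" for g
  proof -
    have "\<exists>x. (g, x) \<in> MS" using that fstMS by force
    then show ?thesis unfolding ph_def by (rule someI_ex)
  qed
  have uniq: "x = x'" if "(g, x) \<in> MS" "(g, x') \<in> MS" for g x x'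
    using inj_onD[OF inj _ that(1) that(2)] by simp
  show ?thesis
    unfolding spinorial_def
  proof (intro exI[of _ ph] conjI ballI)
    fix g assume g: "g \<in> carrier (sym_group n)"
    show "ph g \<in> Pin" using sub phM[OF g] by auto
    show "pin_rho (ph g) = \<pi> g" using sub phM[OF g] by auto
  next
    fix g h assume g: "g \<in> carrier (sym_group n)" and h: "h \<in> carrier (sym_group n)"
    have "pmul (g, ph g) (h, ph h) \<in> MS" using phM g h closed by blast
    then have "(g \<circ> h, ph g \<star> ph h) \<in> MS" by (simp add: pmul_def)
    moreover have "(g \<circ> h, ph (g \<circ> h)) \<in> MS" using phM carrier_comp g h by blast
    ultimately show "ph (g \<otimes>\<^bsub>sym_group n\<^esub> h) = ph g \<star> ph h"
      by (simp add: sym_group_mult uniq)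
  qed
qed

end

lemma restrict_spinorial:
  assumes "spinorial (sym_group n) \<pi>" "X \<subseteq> carrier (sym_group n)"
  shows "spinorial ((sym_group n)\<lparr>carrier := X\<rparr>) \<pi>"
  using assms unfolding spinorial_def by (auto simp: sym_group_mult) blast

theorem corollary3p5:
  fixes n :: nat and \<pi> :: "(nat \<Rightarrow> nat) \<Rightarrow> (real, 'd::{finite,linorder}) vec \<Rightarrow> (real,'d) vec"
  assumes "n \<ge> 4"
    and "real_rep (sym_group n) \<pi>"
  shows "spinorial (sym_group n) \<pi> \<longleftrightarrow>
    spinorial ((sym_group n)\<lparr>carrier := generate (sym_group n) {Transposition.transpose (1::nat) 2}\<rparr>) \<pi> \<and>
    spinorial ((sym_group n)\<lparr>carrier := generate (sym_group n) {Transposition.transpose (1::nat) 2 \<circ> Transposition.transpose (3::nat) 4}\<rparr>) \<pi>"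
proof -
  interpret sp n \<pi> using assms by unfold_locales
  have e1: "adj 1 = Transposition.transpose (1::nat) 2" by (simp add: adj_def numeral_2_eq_2)
  have e3: "adj 3 = Transposition.transpose (3::nat) 4" by (simp add: adj_def)
  have c1: "adj 1 \<in> car" "adj 3 \<in> car" using assms by (auto intro: adj_carrier)
  have c13: "adj 1 \<circ> adj 3 \<in> car" using c1 by (rule carrier_comp)
  have gi: "generate (sym_group n) {a} \<subseteq> car" if "a \<in> car" for a
    using group.generate_incl[OF sym_group_is_group] that by blast
  show ?thesis
  proof
    assume "spinorial (sym_group n) \<pi>"
    then show "spinorial ((sym_group n)\<lparr>carrier := generate (sym_group n) {Transposition.transpose (1::nat) 2}\<rparr>) \<pi> \<and>
      spinorial ((sym_group n)\<lparr>carrier := generate (sym_group n) {Transposition.transpose (1::nat) 2 \<circ> Transposition.transpose (3::nat) 4}\<rparr>) \<pi>"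
      using restrict_spinorial gi c1 c13 unfolding e1[symmetric] e3[symmetric] by blast
  next
    assume a: "spinorial ((sym_group n)\<lparr>carrier := generate (sym_group n) {Transposition.transpose (1::nat) 2}\<rparr>) \<pi> \<and>
      spinorial ((sym_group n)\<lparr>carrier := generate (sym_group n) {Transposition.transpose (1::nat) 2 \<circ> Transposition.transpose (3::nat) 4}\<rparr>) \<pi>"
    obtain t1 where t1: "t1 \<in> Pin" "pin_rho t1 = \<pi> (adj 1)" "t1 \<star> t1 = cl_one"
      using extract_lift[of "adj 1"] a adj_sq unfolding e1[symmetric] e3[symmetric] by blast
    have sq13: "(adj 1 \<circ> adj 3) \<circ> (adj 1 \<circ> adj 3) = id"
      by (rule ext) (simp add: adj_def Transposition.transpose_def)
    obtain y0 where y0: "y0 \<in> Pin" "pin_rho y0 = \<pi> (adj 1 \<circ> adj 3)" "y0 \<star> y0 = cl_one"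
      using extract_lift[of "adj 1 \<circ> adj 3"] a sq13 unfolding e1[symmetric] e3[symmetric] by blast
    interpret sp2 n \<pi> t1 y0 using assms t1 y0 by unfold_locales auto
    show "spinorial (sym_group n) \<pi>" by (rule main)
  qed
qed


end
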